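(* For every state $p=p_1\otimes\cdots\otimes p_L\in B_{\lambda_1}\otimes\cdots\otimes B_{\lambda_L}$ and every $l\ge1$, $$\mathcal E_{n+1}(p)-\mathcal E_{n+1}(T_l(p))=E_l(p).$$
   Context: Fix $n\ge1$. For $l\ge1$ let $B_l=\{x=(x_1,\dots,x_{n+1})\in\mathbb Z_{\ge0}^{n+1}: \sum_i x_i=l\}$ and $u_l=(l,0,\dots,0)\in B_l$. Indices of $x$ are read modulo $n+1$. For $x\in B_l,y\in B_m$ and $i\in\mathbb Z$ put $Q_i(x\otimes y)=\min_{1\le k\le n+1}\big(\sum_{j=1}^{k-1}x_{i+j}+\sum_{j=k+1}^{n+1}y_{i+j}\big)$ (so $Q_{n+1}=Q_0$) and $H(x\otimes y)=\min(l,m)-Q_0(x\otimes y)$. The combinatorial $R$ is the map $B_l\otimes B_m\to B_m\otimes B_l$, $x\otimes y\mapsto\tilde y\otimes\tilde x$, $\tilde x_i=x_i+Q_i-Q_{i-1}$, $\tilde y_i=y_i+Q_{i-1}-Q_i$ ($Q_j=Q_j(x\otimes y)$); write $x\otimes y\simeq\tilde y\otimes\tilde x$, and extend $\simeq$ to tensor products by applying $R$ to adjacent factors. Box-ball system: for a state $p=p_1\otimes\cdots\otimes p_L\in B_{\lambda_1}\otimes\cdots\otimes B_{\lambda_L}$ and $l\ge1$ let $v_0=u_l$ and recursively $v_{j-1}\otimes p_j\simeq p'_j\otimes v_j$ ($1\le j\le L$); then $T_l(p)=p'_1\otimes\cdots\otimes p'_L$ and $E_l(p)=\sum_{j=1}^L\big(\min(\lambda_j,l)-H(v_{j-1}\otimes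 p_j)\big)$. Energy: for $q=q_1\otimes\cdots\otimes q_k$ and $1\le i\le n+1$ let $\mathcal E^\vee_i(q)=\sum_{1\le j<m\le k}Q_i(q_j\otimes q^{(j+1)}_m)$, where $q^{(j+1)}_m$ is defined by $q_{j+1}\otimes\cdots\otimes q_{m-1}\otimes q_m\simeq q^{(j+1)}_m\otimes(\cdots)$ (moving $q_m$ leftwards by successive combinatorial $R$'s; $q^{(m)}_m=q_m$), and $\mathcal E_i(q)=\mathcal E^\vee_i(u_N\otimes q)$ for any $N\ge\max_j\lambda_j$ (independent of such $N$). *)

theory Defs
  imports Main
begin

text \<open>Elements of the crystal B_l (for fixed n) are represented as integer lists
  of length n+1 with nonnegative entries summing to l.  Entry x_i (1-based,
  index read modulo n+1) is \<open>comp n x i\<close>.\<close>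

definition B :: "nat \<Rightarrow> nat \<Rightarrow> int list set" where
  "B n l = {x. length x = n + 1 \<and> (\<forall>a\<in>set x. 0 \<le> a) \<and> sum_list x = int l}"

definition u :: "nat \<Rightarrow> nat \<Rightarrow> int list" where
  "u n l = int l # replicate n 0"

definition comp :: "nat \<Rightarrow> int list \<Rightarrow> int \<Rightarrow> int" where
  "comp n x i = x ! nat ((i - 1) mod int (n + 1))"

definition wt :: "int list \<Rightarrow> int" where
  "wt x = sum_list x"

definition Q :: "nat \<Rightarrow> int \<Rightarrow> int list \<Rightarrow> int list \<Rightarrow> int" where
  "Q n i x y = Min ((\<lambda>k. (\<Sum>j\<in>{1..<k}. comp n x (i + int j))
                        + (\<Sum>j\<in>{k<..n+1}. comp n y (i + int j))) ` {1..n+1})"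

definition H :: "nat \<Rightarrow> int list \<Rightarrow> int list \<Rightarrow> int" where
  "H n x y = min (wt x) (wt y) - Q n 0 x y"

text \<open>Combinatorial R: x \<otimes> y \<mapsto> ytilde \<otimes> xtilde, returned as the pair (ytilde, xtilde).\<close>
definition R :: "nat \<Rightarrow> int list \<Rightarrow> int list \<Rightarrow> int list \<times> int list" where
  "R n x y =
     (map (\<lambda>i. comp n y (int i) + Q n (int i - 1) x y - Q n (int i) x y) [1..<n+2],
      map (\<lambda>i. comp n x (int i) + Q n (int i) x y - Q n (int i - 1) x y) [1..<n+2])"

text \<open>Box-ball run with carrier in B_l: returns (T_l(p), E_l(p)).\<close>
fun bbs_run :: "nat \<Rightarrow> nat \<Rightarrow> int list \<Rightarrow> int list list \<Rightarrow> int list list \<times> int" where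
  "bbs_run n l v [] = ([], 0)"
| "bbs_run n l v (p # ps) =
     (let (p', v') = R n v p; (rest, e) = bbs_run n l v' ps
      in (p' # rest, (min (wt p) (int l) - H n v p) + e))"

definition T :: "nat \<Rightarrow> nat \<Rightarrow> int list list \<Rightarrow> int list list" where
  "T n l p = fst (bbs_run n l (u n l) p)"

definition E :: "nat \<Rightarrow> nat \<Rightarrow> int list list \<Rightarrow> int" where
  "E n l p = snd (bbs_run n l (u n l) p)"

text \<open>Move y leftwards through xs by successive R's: for xs = [q_{j+1},...,q_{m-1}]
  and y = q_m this gives q^{(j+1)}_m.\<close>
definition moveL :: "nat \<Rightarrow> int list list \<Rightarrow> int list \<Rightarrow> int list" where
  "moveL n xs y = foldr (\<lambda>x y. fst (R n x y)) xs y"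

definition Edual :: "nat \<Rightarrow> int \<Rightarrow> int list list \<Rightarrow> int" where
  "Edual n i q = (\<Sum>(j, m) \<in> {(j, m). j < m \<and> m < length q}.
       Q n i (q ! j) (moveL n (take (m - j - 1) (drop (j + 1) q)) (q ! m)))"

text \<open>Energy: E_i(q) = Edual_i(u_N \<otimes> q), with the admissible choice N = max_j wt(q_j).\<close>
definition Energy :: "nat \<Rightarrow> int \<Rightarrow> int list list \<Rightarrow> int" where
  "Energy n i q = Edual n i (u n (nat (foldr max (map wt q) 0)) # q)"

end

theory Submission
  imports Defs Complex_Main
begin

definition per :: "nat \<Rightarrow> (int \<Rightarrow> 'a) \<Rightarrow> bool" where
  "per N x \<longleftrightarrow> (\<forall>i. x (i + int N) = x i)"

lemma per_prod_step:
  fixes x :: "int \<Rightarrow> 'a::comm_monoid_mult"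
  assumes "per N x"
  shows "(\<Prod>j<N. x (i + 1 + int j)) = (\<Prod>j<N. x (i + int j))"
proof (cases N)
  case 0 then show ?thesis by simp
next
  case (Suc M)
  have a: "(\<Prod>j<Suc M. x (i + int j)) = x (i + int 0) * (\<Prod>j<M. x (i + int (Suc j)))"
    by (rule prod.lessThan_Suc_shift)
  have b: "(\<Prod>j<Suc M. x (i + 1 + int j)) = (\<Prod>j<M. x (i + 1 + int j)) * x (i + 1 + int M)"
    by simp
  have c: "x (i + 1 + int M) = x i" using assms Suc unfolding per_def
    by (metis add.commute add.left_commute of_nat_Suc)
  have d: "(\<Prod>j<M. x (i + int (Suc j))) = (\<Prod>j<M. x (i + 1 + int j))"
    by (simp add: add.assoc)
  show ?thesis using a b c d Suc by (simp add: mult.commute)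
qed

lemma per_sum_step:
  fixes x :: "int \<Rightarrow> 'a::comm_monoid_add"
  assumes "per N x"
  shows "(\<Sum>j<N. x (i + 1 + int j)) = (\<Sum>j<N. x (i + int j))"
proof (cases N)
  case 0 then show ?thesis by simp
next
  case (Suc M)
  have a: "(\<Sum>j<Suc M. x (i + int j)) = x (i + int 0) + (\<Sum>j<M. x (i + int (Suc j)))"
    by (rule sum.lessThan_Suc_shift)
  have b: "(\<Sum>j<Suc M. x (i + 1 + int j)) = (\<Sum>j<M. x (i + 1 + int j)) + x (i + 1 + int M)"
    by simp
  have c: "x (i + 1 + int M) = x i" using assms Suc unfolding per_def
    by (metis add.commute add.left_commute of_nat_Suc)
  have d: "(\<Sum>j<M. x (i + int (Suc j))) = (\<Sum>j<M. x (i + 1 + int j))"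
    by (simp add: add.assoc)
  show ?thesis using a b c d Suc by (simp add: add.commute)
qed

lemma per_prod_shift:
  fixes x :: "int \<Rightarrow> 'a::comm_monoid_mult"
  assumes "per N x"
  shows "(\<Prod>j<N. x (i + int j)) = (\<Prod>j<N. x (int j))"
proof (induction i rule: int_induct[where k=0])
  case base then show ?case by simp
next
  case (step1 i) then show ?case using per_prod_step[OF assms, of i] by simp
next
  case (step2 i) then show ?case using per_prod_step[OF assms, of "i - 1"] by simp
qed

lemma per_sum_shift:
  fixes x :: "int \<Rightarrow> 'a::comm_monoid_add"
  assumes "per N x"
  shows "(\<Sum>j<N. x (i + int j)) = (\<Sum>j<N. x (int j))"
proof (induction i rule: int_induct[where k=0])
  case base then show ?case by simp
next
  case (step1 i) then show ?case using per_sum_step[OF assms, of i] by simp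
next
  case (step2 i) then show ?case using per_sum_step[OF assms, of "i - 1"] by simp
qed

definition gP :: "nat \<Rightarrow> (int \<Rightarrow> real) \<Rightarrow> (int \<Rightarrow> real) \<Rightarrow> int \<Rightarrow> real" where
  "gP N x y i = (\<Sum>k\<in>{1..N}. (\<Prod>j\<in>{1..<k}. x (i + int j)) * (\<Prod>j\<in>{k<..N}. y (i + int j)))"

definition gpr :: "nat \<Rightarrow> (int \<Rightarrow> real) \<Rightarrow> real" where
  "gpr N x = (\<Prod>j<N. x (int j))"

lemma prod_split0: "1 \<le> (k::nat) \<Longrightarrow> (\<Prod>j<k. f j) = f 0 * (\<Prod>j\<in>{1..<k}. (f j :: real))"
proof -
  assume k: "1 \<le> k"
  have "(\<Prod>j<k. f j) = prod f {0..<k}" by (simp add: atLeast0LessThan)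
  also have "\<dots> = f 0 * prod f {Suc 0..<k}" using k by (intro prod.atLeast_Suc_lessThan) simp
  finally show ?thesis by simp
qed

lemma diffP:
  assumes px: "per N x" and py: "per N y"
  shows "x i * gP N x y i - y i * gP N x y (i - 1) = gpr N x - gpr N y"
proof -
  define F where "F k = (\<Prod>j<k. x (i + int j)) * (\<Prod>j\<in>{k<..N}. y (i + int j))" for k
  have A: "x i * gP N x y i = (\<Sum>k\<in>{1..N}. F k)"
    unfolding gP_def sum_distrib_left
  proof (rule sum.cong)
    fix k assume k: "k \<in> {1..N}"
    have "(\<Prod>j<k. x (i + int j)) = x (i + int 0) * (\<Prod>j\<in>{1..<k}. x (i + int j))"
      using k by (intro prod_split0) auto
    then show "x i * ((\<Prod>j\<in>{1..<k}. x (i + int j)) * (\<Prod>j\<in>{k<..N}. y (i + int j))) = F k"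
      unfolding F_def by simp
  qed simp
  have B: "y i * gP N x y (i - 1) = (\<Sum>k\<in>{1..N}. F (k - 1))"
    unfolding gP_def sum_distrib_left
  proof (rule sum.cong)
    fix k assume k: "k \<in> {1..N}"
    then obtain m where m: "k = Suc m" "m < N" by (cases k) auto
    have 1: "(\<Prod>j\<in>{1..<k}. x (i - 1 + int j)) = (\<Prod>j<m. x (i + int j))"
    proof -
      have "(\<Prod>j\<in>{1..<k}. x (i - 1 + int j)) = (\<Prod>j\<in>{0+1..<m+1}. x (i - 1 + int j))"
        using m by simp
      also have "\<dots> = (\<Prod>j\<in>{0..<m}. x (i - 1 + int (j + 1)))"
        by (rule prod.shift_bounds_nat_ivl)
      also have "\<dots> = (\<Prod>j<m. x (i + int j))" by (simp add: atLeast0LessThan)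
      finally show ?thesis .
    qed
    have 2: "y i * (\<Prod>j\<in>{k<..N}. y (i - 1 + int j)) = (\<Prod>j\<in>{m<..N}. y (i + int j))"
    proof -
      have "(\<Prod>j\<in>{k<..N}. y (i - 1 + int j)) = (\<Prod>j\<in>{Suc m+1..(N-1)+1}. y (i - 1 + int j))"
      proof -
        have "{k<..N} = {Suc m+1..(N-1)+1}" using m by auto
        then show ?thesis by simp
      qed
      also have "\<dots> = (\<Prod>j\<in>{Suc m..N-1}. y (i - 1 + int (j + 1)))"
        by (rule prod.shift_bounds_cl_nat_ivl)
      also have "\<dots> = (\<Prod>j\<in>{Suc m..N-1}. y (i + int j))" by simp
      finally have e: "(\<Prod>j\<in>{k<..N}. y (i - 1 + int j)) = (\<Prod>j\<in>{Suc m..N-1}. y (i + int j))" .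
      have yN: "y i = y (i + int N)" using py unfolding per_def by simp
      have s: "{m<..N} = insert N {Suc m..N-1}" using m by auto
      have "(\<Prod>j\<in>{m<..N}. y (i + int j)) = y (i + int N) * (\<Prod>j\<in>{Suc m..N-1}. y (i + int j))"
        unfolding s by (subst prod.insert) auto
      then show ?thesis using e yN by simp
    qed
    show "y i * ((\<Prod>j\<in>{1..<k}. x (i - 1 + int j)) * (\<Prod>j\<in>{k<..N}. y (i - 1 + int j))) = F (k - 1)"
      unfolding F_def using 1 2 m by (simp add: algebra_simps)
  qed simp
  have C: "(\<Sum>k\<in>{1..N}. F k) = (\<Sum>k<N. F (Suc k))"
  proof -
    have "(\<Sum>k\<in>{1..N}. F k) = (\<Sum>k\<in>{0+1..<N+1}. F k)"
      by (metis Suc_eq_plus1 add_0 atLeastLessThanSuc_atLeastAtMost)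
    also have "\<dots> = (\<Sum>k\<in>{0..<N}. F (k+1))" by (rule sum.shift_bounds_nat_ivl)
    finally show ?thesis by (simp add: atLeast0LessThan)
  qed
  have D: "(\<Sum>k\<in>{1..N}. F (k - 1)) = (\<Sum>k<N. F k)"
  proof -
    have "(\<Sum>k\<in>{1..N}. F (k - 1)) = (\<Sum>k\<in>{0+1..<N+1}. F (k - 1))"
      by (metis Suc_eq_plus1 add_0 atLeastLessThanSuc_atLeastAtMost)
    also have "\<dots> = (\<Sum>k\<in>{0..<N}. F (k + 1 - 1))" by (rule sum.shift_bounds_nat_ivl)
    finally show ?thesis by (simp add: atLeast0LessThan)
  qed
  have E: "(\<Sum>k<N. F (Suc k)) - (\<Sum>k<N. F k) = F N - F 0"
    by (simp add: sum_subtractf[symmetric] sum_lessThan_telescope)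
  have FN: "F N = gpr N x" unfolding F_def gpr_def using per_prod_shift[OF px, of i] by simp
  have F0: "F 0 = gpr N y"
  proof -
    have "(\<Prod>j\<in>{0<..N}. y (i + int j)) = (\<Prod>j\<in>{0+1..<N+1}. y (i + int j))"
      by (metis Suc_eq_plus1 add_0 atLeastLessThanSuc_atLeastAtMost atLeastSucAtMost_greaterThanAtMost)
    also have "\<dots> = (\<Prod>j\<in>{0..<N}. y (i + int (j+1)))" by (rule prod.shift_bounds_nat_ivl)
    also have "\<dots> = (\<Prod>j<N. y (i + 1 + int j))" by (simp add: atLeast0LessThan ac_simps)
    also have "\<dots> = gpr N y" unfolding gpr_def using per_prod_shift[OF py, of "i+1"] by simp
    finally show ?thesis unfolding F_def by simp
  qed
  show ?thesis using A B C D E FN F0 by simp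
qed

definition pos :: "(int \<Rightarrow> real) \<Rightarrow> bool" where
  "pos x \<longleftrightarrow> (\<forall>i. x i > 0)"

lemma per_add: "per N x \<Longrightarrow> x (a + int N + b) = x (a + b)"
  unfolding per_def by (metis add.commute add.left_commute)

lemma per_sub: "per N x \<Longrightarrow> x (a - int N) = x a"
  unfolding per_def by (metis diff_add_cancel)

lemma gP_pos: assumes "pos x" "pos y" "N \<ge> 1" shows "gP N x y i > 0"
  unfolding gP_def using assms unfolding pos_def
  by (intro sum_pos mult_pos_pos prod_pos) auto

lemma gP_per: assumes "per N x" "per N y" shows "gP N x y (i + int N) = gP N x y i"
  unfolding gP_def using per_add[OF assms(1)] per_add[OF assms(2)] by simp

definition gRy :: "nat \<Rightarrow> (int \<Rightarrow> real) \<Rightarrow> (int \<Rightarrow> real) \<Rightarrow> int \<Rightarrow> real" where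
  "gRy N x y i = y i * gP N x y (i - 1) / gP N x y i"

definition gRx :: "nat \<Rightarrow> (int \<Rightarrow> real) \<Rightarrow> (int \<Rightarrow> real) \<Rightarrow> int \<Rightarrow> real" where
  "gRx N x y i = x i * gP N x y i / gP N x y (i - 1)"

lemma gRy_pos: "pos x \<Longrightarrow> pos y \<Longrightarrow> N \<ge> 1 \<Longrightarrow> pos (gRy N x y)"
  unfolding pos_def gRy_def using gP_pos[of x y N] unfolding pos_def by simp

lemma gRx_pos: "pos x \<Longrightarrow> pos y \<Longrightarrow> N \<ge> 1 \<Longrightarrow> pos (gRx N x y)"
  unfolding pos_def gRx_def using gP_pos[of x y N] unfolding pos_def by simp

lemma gRy_per: "per N x \<Longrightarrow> per N y \<Longrightarrow> per N (gRy N x y)"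
  unfolding gRy_def per_def
proof (intro allI)
  fix i assume a: "\<forall>i. x (i + int N) = x i" "\<forall>i. y (i + int N) = y i"
  have "gP N x y (i - 1 + int N) = gP N x y (i - 1)" using gP_per a unfolding per_def by blast
  moreover have "gP N x y (i + int N) = gP N x y i" using gP_per a unfolding per_def by blast
  ultimately show "y (i + int N) * gP N x y (i + int N - 1) / gP N x y (i + int N) =
         y i * gP N x y (i - 1) / gP N x y i" using a by (simp add: algebra_simps)
qed

lemma gRx_per: "per N x \<Longrightarrow> per N y \<Longrightarrow> per N (gRx N x y)"
  unfolding gRx_def per_def
proof (intro allI)
  fix i assume a: "\<forall>i. x (i + int N) = x i" "\<forall>i. y (i + int N) = y i"
  have "gP N x y (i - 1 + int N) = gP N x y (i - 1)" using gP_per a unfolding per_def by blast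
  moreover have "gP N x y (i + int N) = gP N x y i" using gP_per a unfolding per_def by blast
  ultimately show "x (i + int N) * gP N x y (i + int N) / gP N x y (i + int N - 1) =
         x i * gP N x y i / gP N x y (i - 1)" using a by (simp add: algebra_simps)
qed

lemma gP_prod_shift:
  assumes "per N x" "per N y"
  shows "(\<Prod>j<N. gP N x y (int j - 1)) = (\<Prod>j<N. gP N x y (int j))"
proof -
  have "per N (gP N x y)" unfolding per_def using gP_per[OF assms] by blast
  from per_prod_shift[OF this, of "-1"] show ?thesis by simp
qed

lemma gpr_gRy: assumes "per N x" "per N y" "pos x" "pos y" "N \<ge> 1"
  shows "gpr N (gRy N x y) = gpr N y"
proof -
  have nz: "(\<Prod>j<N. gP N x y (int j)) \<noteq> 0" using gP_pos[OF assms(3-5)]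
    by (simp add: prod_pos less_imp_neq[symmetric])
  have "gpr N (gRy N x y) = gpr N y * (\<Prod>j<N. gP N x y (int j - 1)) / (\<Prod>j<N. gP N x y (int j))"
    unfolding gpr_def gRy_def by (simp add: prod.distrib prod_dividef)
  then show ?thesis using gP_prod_shift[OF assms(1,2)] nz by simp
qed

lemma gpr_gRx: assumes "per N x" "per N y" "pos x" "pos y" "N \<ge> 1"
  shows "gpr N (gRx N x y) = gpr N x"
proof -
  have nz: "(\<Prod>j<N. gP N x y (int j)) \<noteq> 0" using gP_pos[OF assms(3-5)]
    by (simp add: prod_pos less_imp_neq[symmetric])
  have "gpr N (gRx N x y) = gpr N x * (\<Prod>j<N. gP N x y (int j)) / (\<Prod>j<N. gP N x y (int j - 1))"
    unfolding gpr_def gRx_def by (simp add: prod.distrib prod_dividef)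
  then show ?thesis using gP_prod_shift[OF assms(1,2)] nz by simp
qed

definition S :: "(int \<Rightarrow> real) \<Rightarrow> (int \<Rightarrow> real) \<Rightarrow> int \<Rightarrow> real" where
  "S a v j = a j * v j + v (j - 1)"

lemma whurl:
  assumes "per N x" "per N y" "pos x" "pos y" "N \<ge> 1"
  shows "S y (S x v) = S (gRx N x y) (S (gRy N x y) v)"
proof (rule ext)
  fix j
  define P where "P = gP N x y"
  define G where "G = gpr N x - gpr N y"
  have d1: "x j * P j - y j * P (j - 1) = G" unfolding P_def G_def by (rule diffP[OF assms(1,2)])
  have d2: "x (j-1) * P (j-1) - y (j-1) * P (j - 1 - 1) = G" unfolding P_def G_def by (rule diffP[OF assms(1,2)])
  have p1: "P j > 0" "P (j-1) > 0" "P (j-1-1) > 0" unfolding P_def using gP_pos[OF assms(3-5)] by auto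
  have e1: "gRx N x y j * gRy N x y j = x j * y j"
    unfolding gRx_def gRy_def P_def[symmetric] using p1 by (simp add: field_simps)
  have e2: "gRx N x y j + gRy N x y (j - 1) = y j + x (j - 1)"
  proof -
    have "x j * P j + y (j-1) * P (j-1-1) = (y j + x (j-1)) * P (j-1)" using d1 d2 by (simp add: algebra_simps)
    then show ?thesis unfolding gRx_def gRy_def P_def[symmetric] using p1 by (simp add: field_simps)
  qed
  have "S y (S x v) j = x j * y j * v j + (y j + x (j-1)) * v (j-1) + v (j - 1 - 1)"
    unfolding S_def by (simp add: algebra_simps)
  moreover have "S (gRx N x y) (S (gRy N x y) v) j = gRx N x y j * gRy N x y j * v j
     + (gRx N x y j + gRy N x y (j - 1)) * v (j-1) + v (j - 1 - 1)"
    unfolding S_def by (simp add: algebra_simps)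
  ultimately show "S y (S x v) j = S (gRx N x y) (S (gRy N x y) v) j" using e1 e2 by simp
qed

definition ker :: "(int \<Rightarrow> real) \<Rightarrow> (int \<Rightarrow> real) \<Rightarrow> bool" where
  "ker a v \<longleftrightarrow> (\<forall>j. S a v j = 0)"

definition qp :: "nat \<Rightarrow> real \<Rightarrow> (int \<Rightarrow> real) \<Rightarrow> bool" where
  "qp N \<mu> w \<longleftrightarrow> (\<forall>j. w (j - int N) = \<mu> * w j)"

lemma ker_step: "ker a v \<Longrightarrow> v (j - 1) = - a j * v j"
  unfolding ker_def S_def by (metis add_eq_0_iff mult_minus_left)

lemma ker_nz:
  assumes "pos a" "ker a v" "v j0 \<noteq> 0"
  shows "v j \<noteq> 0"
proof (induction j rule: int_induct[where k=j0])
  case base then show ?case using assms by simp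
next
  case (step1 i)
  have "v i = - a (i+1) * v (i+1)" using ker_step[OF assms(2), of "i+1"] by simp
  then show ?case using step1 by auto
next
  case (step2 i)
  have "v (i - 1) = - a i * v i" using ker_step[OF assms(2), of i] by simp
  then show ?case using step2 assms(1) unfolding pos_def by (metis less_irrefl mult_eq_0_iff neg_equal_0_iff_equal)
qed

lemma ker_unique:
  assumes "pos a" "ker a v" "ker b v" "v j0 \<noteq> 0"
  shows "a j = b j"
proof -
  have "v j \<noteq> 0" by (rule ker_nz[OF assms(1,2,4)])
  moreover have "- a j * v j = - b j * v j" using ker_step[OF assms(2)] ker_step[OF assms(3)] by metis
  ultimately show ?thesis by simp
qed

lemma ker_apply: "ker b v \<Longrightarrow> S a v j = (a j - b j) * v j"
  using ker_step[of b v j] unfolding S_def by (simp add: algebra_simps)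

lemma ker_iter:
  assumes "ker a v"
  shows "v i = (-1)^m * (\<Prod>t<m. a (i + 1 + int t)) * v (i + int m)"
proof (induction m)
  case 0 then show ?case by simp
next
  case (Suc m)
  have "v (i + int m) = - a (i + int m + 1) * v (i + int m + 1)"
    using ker_step[OF assms, of "i + int m + 1"] by simp
  then show ?case using Suc by (simp add: algebra_simps)
qed

lemma ker_quasi:
  assumes "per N a" "ker a v"
  shows "v (j - int N) = (-1)^N * gpr N a * v j"
proof -
  have "v (j - int N) = (-1)^N * (\<Prod>t<N. a (j - int N + 1 + int t)) * v (j - int N + int N)"
    by (rule ker_iter[OF assms(2)])
  then show ?thesis unfolding gpr_def using per_prod_shift[OF assms(1), of "j - int N + 1"] by simp
qed

lemma S_qp: assumes "per N a" "qp N \<mu> w" shows "qp N \<mu> (S a w)"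
  unfolding qp_def S_def
proof
  fix j
  have "w (j - int N - 1) = \<mu> * w (j - 1)" using assms(2) unfolding qp_def
    by (metis diff_diff_eq add.commute diff_diff_eq2)
  moreover have "a (j - int N) = a j" by (rule per_sub[OF assms(1)])
  moreover have "w (j - int N) = \<mu> * w j" using assms(2) unfolding qp_def by blast
  ultimately show "a (j - int N) * w (j - int N) + w (j - int N - 1) = \<mu> * (a j * w j + w (j - 1))"
    by (simp add: algebra_simps)
qed

lemma ker_qp:
  assumes "pos a" "per N a" "ker a w" "qp N \<mu> w" "w j0 \<noteq> 0"
  shows "\<mu> = (-1)^N * gpr N a"
proof -
  have "w (j0 - int N) = (-1)^N * gpr N a * w j0" by (rule ker_quasi[OF assms(2,3)])
  moreover have "w (j0 - int N) = \<mu> * w j0" using assms(4) unfolding qp_def by blast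
  ultimately show ?thesis using assms(5) by simp
qed

lemma ker_exists:
  assumes "pos a"
  shows "\<exists>v. ker a v \<and> v 0 = 1"
proof -
  define v where "v j = (if j \<ge> 0 then (-1)^nat j / (\<Prod>t<nat j. a (1 + int t))
                          else (-1)^nat (-j) * (\<Prod>t<nat (-j). a (j + 1 + int t)))" for j
  have "ker a v" unfolding ker_def S_def
  proof
    fix j
    show "a j * v j + v (j - 1) = 0"
    proof (cases "j \<ge> 1")
      case True
      define m where "m = nat (j - 1)"
      have m: "j = int m + 1" using True m_def by simp
      have pp: "(\<Prod>t<m. a (1 + int t)) > 0" using assms unfolding pos_def by (simp add: prod_pos)
      have vj: "v j = (-1)^(Suc m) / ((\<Prod>t<m. a (1 + int t)) * a (1 + int m))"
        unfolding v_def using m by (simp add: nat_add_distrib)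
      have vj1: "v (j - 1) = (-1)^m / (\<Prod>t<m. a (1 + int t))"
        unfolding v_def using m by simp
      have aj: "a j = a (1 + int m)" using m by (simp add: add.commute)
      have "a (1 + int m) > 0" using assms unfolding pos_def by simp
      then show ?thesis unfolding vj vj1 aj using pp by (simp add: field_simps)
    next
      case False
      define m where "m = nat (- j)"
      have m: "j = - int m" using False m_def by simp
      have vj: "v j = (-1)^m * (\<Prod>t<m. a (- int m + 1 + int t))"
        unfolding v_def using m by (cases "m = 0") auto
      have vj1: "v (j - 1) = (-1)^(Suc m) * (\<Prod>t<Suc m. a (- int m + int t))"
      proof -
        have "nat (- (j - 1)) = Suc m" using m by simp
        moreover have "\<not> j - 1 \<ge> 0" using m by simp
        ultimately show ?thesis unfolding v_def using m by (simp add: algebra_simps)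
      qed
      have "(\<Prod>t<Suc m. a (- int m + int t)) = a (- int m + int 0) * (\<Prod>t<m. a (- int m + int (Suc t)))"
        by (rule prod.lessThan_Suc_shift)
      also have "\<dots> = a j * (\<Prod>t<m. a (- int m + 1 + int t))" using m by (simp add: algebra_simps)
      finally show ?thesis unfolding vj vj1 by (simp add: algebra_simps)
    qed
  qed
  moreover have "v 0 = 1" by (simp add: v_def)
  ultimately show ?thesis by blast
qed

lemma S_zero: "S a (\<lambda>_. 0) = (\<lambda>_. 0)"
  unfolding S_def by auto

lemma ker_S: "ker a v \<Longrightarrow> S a v = (\<lambda>_. 0)"
  unfolding ker_def by auto

lemma gRy_diff:
  assumes "per N x" "per N y" "pos x" "pos y" "N \<ge> 1"
  shows "x j - gRy N x y j = (gpr N x - gpr N y) / gP N x y j"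
proof -
  have d: "x j * gP N x y j - y j * gP N x y (j - 1) = gpr N x - gpr N y" by (rule diffP[OF assms(1,2)])
  have "gP N x y j > 0" by (rule gP_pos[OF assms(3-5)])
  then show ?thesis unfolding gRy_def using d by (simp add: field_simps)
qed

definition good :: "nat \<Rightarrow> (int \<Rightarrow> real) \<Rightarrow> bool" where
  "good N a \<longleftrightarrow> per N a \<and> pos a"

lemma good_gRy: "good N x \<Longrightarrow> good N y \<Longrightarrow> N \<ge> 1 \<Longrightarrow> good N (gRy N x y)"
  unfolding good_def using gRy_per gRy_pos by blast

lemma good_gRx: "good N x \<Longrightarrow> good N y \<Longrightarrow> N \<ge> 1 \<Longrightarrow> good N (gRx N x y)"
  unfolding good_def using gRx_per gRx_pos by blast

lemma geo_ybe:
  assumes gx: "good N x" and gy: "good N y" and gz: "good N z" and N: "N \<ge> 1"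
    and dx: "gpr N z \<noteq> gpr N x" and dy: "gpr N z \<noteq> gpr N y"
  shows "gRy N x (gRy N y z) j = gRy N (gRy N x y) (gRy N (gRx N x y) z) j"
    and "gP N y z j * gP N x (gRy N y z) j
         = gP N (gRx N x y) z j * gP N (gRy N x y) (gRy N (gRx N x y) z) j"
proof -
  define z1 where "z1 = gRy N y z"
  define y1 where "y1 = gRx N y z"
  define zs where "zs = gRy N x z1"
  define xs where "xs = gRx N x z1"
  define y2 where "y2 = gRy N x y"
  define x2 where "x2 = gRx N x y"
  define zh where "zh = gRy N x2 z"
  define x3 where "x3 = gRx N x2 z"
  define zss where "zss = gRy N y2 zh"
  define y3 where "y3 = gRx N y2 zh"
  have g: "good N z1" "good N y1" "good N zs" "good N xs" "good N y2" "good N x2"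
          "good N zh" "good N x3" "good N zss" "good N y3"
    unfolding z1_def y1_def zs_def xs_def y2_def x2_def zh_def x3_def zss_def y3_def
    using gx gy gz N good_gRy good_gRx by meson+
  note gd = good_def
  have gpz1: "gpr N z1 = gpr N z" unfolding z1_def using gy gz N gpr_gRy unfolding gd by blast
  have gpzs: "gpr N zs = gpr N z" unfolding zs_def using gx g(1) N gpr_gRy gpz1 unfolding gd by metis
  have gpy2: "gpr N y2 = gpr N y" unfolding y2_def using gx gy N gpr_gRy unfolding gd by blast
  have gpx2: "gpr N x2 = gpr N x" unfolding x2_def using gx gy N gpr_gRx unfolding gd by blast
  have gpzh: "gpr N zh = gpr N z" unfolding zh_def using g(6) gz N gpr_gRy unfolding gd by blast
  have gpx3: "gpr N x3 = gpr N x" unfolding x3_def using g(6) gz N gpr_gRx gpx2 unfolding gd by metis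
  have gpy3: "gpr N y3 = gpr N y" unfolding y3_def using g(5) g(7) N gpr_gRx gpy2 unfolding gd by metis
  obtain v where kv: "ker zs v" and v0: "v 0 = 1" using ker_exists g(3) unfolding gd by blast
  define \<mu> where "\<mu> = (-1)^N * gpr N z"
  have qv: "qp N \<mu> v" unfolding qp_def \<mu>_def using ker_quasi[OF _ kv] g(3) gpzs unfolding gd by metis
  have w1: "S z (S y w) = S y1 (S z1 w)" for w unfolding y1_def z1_def
    using whurl gy gz N unfolding gd by blast
  have w2: "S z1 (S x w) = S xs (S zs w)" for w unfolding xs_def zs_def
    using whurl gx g(1) N unfolding gd by blast
  have w3: "S y (S x w) = S x2 (S y2 w)" for w unfolding x2_def y2_def
    using whurl gx gy N unfolding gd by blast
  have w4: "S z (S x2 w) = S x3 (S zh w)" for w unfolding x3_def zh_def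
    using whurl g(6) gz N unfolding gd by blast
  have w5: "S zh (S y2 w) = S y3 (S zss w)" for w unfolding y3_def zss_def
    using whurl g(5) g(7) N unfolding gd by blast
  have Sz0: "S zs v = (\<lambda>_. 0)" by (rule ker_S[OF kv])
  have A1: "S z (S y (S x v)) = (\<lambda>_. 0)" using w1 w2 Sz0 S_zero by simp
  have A2: "S z (S y (S x v)) = S x3 (S y3 (S zss v))" using w3 w4 w5 by simp
  define w where "w = S zss v"
  define u where "u = S y3 w"
  have qw: "qp N \<mu> w" unfolding w_def using S_qp qv g(9) unfolding gd by blast
  have qu: "qp N \<mu> u" unfolding u_def using S_qp qw g(10) unfolding gd by blast
  have ku: "ker x3 u" unfolding ker_def u_def w_def using A1 A2 by (metis)
  have sgn: "((-1::real)^N) \<noteq> 0" by simp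
  have u0: "u j = 0" for j
  proof (rule ccontr)
    assume "u j \<noteq> 0"
    then have "\<mu> = (-1)^N * gpr N x3" using ker_qp[OF _ _ ku qu] g(8) unfolding gd by blast
    then show False using dx gpx3 sgn unfolding \<mu>_def by simp
  qed
  have kw: "ker y3 w" unfolding ker_def using u0 unfolding u_def by simp
  have w0: "w j = 0" for j
  proof (rule ccontr)
    assume "w j \<noteq> 0"
    then have "\<mu> = (-1)^N * gpr N y3" using ker_qp[OF _ _ kw qw] g(10) unfolding gd by blast
    then show False using dy gpy3 sgn unfolding \<mu>_def by simp
  qed
  have kv2: "ker zss v" unfolding ker_def using w0 unfolding w_def by simp
  have v0': "v 0 \<noteq> 0" using v0 by simp
  have eq1: "zs j = zss j" for j using ker_unique[OF _ kv kv2 v0'] g(3) unfolding gd by blast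
  then show "gRy N x (gRy N y z) j = gRy N (gRy N x y) (gRy N (gRx N x y) z) j"
    unfolding zs_def zss_def z1_def y2_def zh_def x2_def by simp
  have vj: "v j \<noteq> 0" using ker_nz[OF _ kv v0'] g(3) unfolding gd by blast
  have kSxv: "ker z1 (S x v)" unfolding ker_def using w2 Sz0 S_zero by simp
  have kv3: "ker zss v" by (rule kv2)
  have kSy2v: "ker zh (S y2 v)" unfolding ker_def using w5 ker_S[OF kv2] S_zero by simp
  have "S y (S x v) j = (y j - z1 j) * ((x j - zs j) * v j)"
    using ker_apply[OF kSxv, of y j] ker_apply[OF kv, of x j] by simp
  moreover have "S y (S x v) j = (x2 j - zh j) * ((y2 j - zss j) * v j)"
    using w3 ker_apply[OF kSy2v, of x2 j] ker_apply[OF kv2, of y2 j] by simp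
  ultimately have E: "(y j - z1 j) * (x j - zs j) = (x2 j - zh j) * (y2 j - zss j)"
    using vj by (metis (no_types, lifting) mult.assoc mult_cancel_right)
  have e1: "y j - z1 j = (gpr N y - gpr N z) / gP N y z j"
    unfolding z1_def using gRy_diff gy gz N unfolding gd by blast
  have e2: "x j - zs j = (gpr N x - gpr N z) / gP N x z1 j"
    unfolding zs_def using gRy_diff gx g(1) N gpz1 unfolding gd by metis
  have e3: "x2 j - zh j = (gpr N x - gpr N z) / gP N x2 z j"
    unfolding zh_def using gRy_diff g(6) gz N gpx2 unfolding gd by metis
  have e4: "y2 j - zss j = (gpr N y - gpr N z) / gP N y2 zh j"
    unfolding zss_def using gRy_diff g(5) g(7) N gpy2 gpzh unfolding gd by metis
  have p: "gP N y z j > 0" "gP N x z1 j > 0" "gP N x2 z j > 0" "gP N y2 zh j > 0"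
    using gP_pos gx gy gz g N unfolding gd by blast+
  have nx: "gpr N x - gpr N z \<noteq> 0" and ny: "gpr N y - gpr N z \<noteq> 0" using dx dy by auto
  from E have "gP N y z j * gP N x z1 j = gP N x2 z j * gP N y2 zh j"
  proof -
    have "(gpr N x - gpr N z) * (gpr N y - gpr N z) \<noteq> 0" using nx ny by simp
    then have nn: "gpr N x * gpr N y + gpr N z * gpr N z \<noteq> gpr N x * gpr N z + gpr N y * gpr N z"
      by (simp add: algebra_simps)
    show ?thesis using E unfolding e1 e2 e3 e4 using p nx ny nn by (simp add: field_simps)
  qed
  then show "gP N y z j * gP N x (gRy N y z) j
         = gP N (gRx N x y) z j * gP N (gRy N x y) (gRy N (gRx N x y) z) j"
    unfolding z1_def x2_def y2_def zh_def by simp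
qed

lemma exp_neg_lim: assumes "(d::real) < 0" shows "((\<lambda>s. exp (s * d)) \<longlongrightarrow> 0) at_top"
proof -
  have "filterlim (\<lambda>s. d * s) at_bot at_top"
    by (rule filterlim_tendsto_neg_mult_at_bot[OF tendsto_const assms filterlim_ident])
  then have "filterlim (\<lambda>s. s * d) at_bot at_top" by (simp add: mult.commute)
  then show ?thesis by (rule filterlim_compose[OF exp_at_bot])
qed

definition tasym :: "(real \<Rightarrow> real) \<Rightarrow> real \<Rightarrow> bool" where
  "tasym F a \<longleftrightarrow> (\<exists>c>0. ((\<lambda>s. F s * exp (s * a)) \<longlongrightarrow> c) at_top)"

lemma tasym_exp: assumes "C > 0" shows "tasym (\<lambda>s. C * exp (- (s * a))) a"
proof -
  have "(\<lambda>s. C * exp (- (s * a)) * exp (s * a)) = (\<lambda>s. C)"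
    by (simp add: mult.assoc exp_add[symmetric])
  then show ?thesis unfolding tasym_def using assms by (intro exI[of _ C]) auto
qed

lemma tasym_mult:
  assumes "tasym F a" "tasym G b" shows "tasym (\<lambda>s. F s * G s) (a + b)"
proof -
  obtain c1 c2 where c: "c1 > 0" "c2 > 0" "((\<lambda>s. F s * exp (s * a)) \<longlongrightarrow> c1) at_top"
    "((\<lambda>s. G s * exp (s * b)) \<longlongrightarrow> c2) at_top" using assms unfolding tasym_def by blast
  have "((\<lambda>s. (F s * exp (s * a)) * (G s * exp (s * b))) \<longlongrightarrow> c1 * c2) at_top"
    by (rule tendsto_mult[OF c(3,4)])
  moreover have "(\<lambda>s. (F s * exp (s * a)) * (G s * exp (s * b))) = (\<lambda>s. F s * G s * exp (s * (a + b)))"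
    by (simp add: algebra_simps exp_add[symmetric])
  ultimately show ?thesis unfolding tasym_def using c by (intro exI[of _ "c1 * c2"]) auto
qed

lemma tasym_div:
  assumes "tasym F a" "tasym G b" shows "tasym (\<lambda>s. F s / G s) (a - b)"
proof -
  obtain c1 c2 where c: "c1 > 0" "c2 > 0" "((\<lambda>s. F s * exp (s * a)) \<longlongrightarrow> c1) at_top"
    "((\<lambda>s. G s * exp (s * b)) \<longlongrightarrow> c2) at_top" using assms unfolding tasym_def by blast
  have "((\<lambda>s. (F s * exp (s * a)) / (G s * exp (s * b))) \<longlongrightarrow> c1 / c2) at_top"
    by (rule tendsto_divide[OF c(3,4)]) (use c in simp)
  moreover have "(\<lambda>s. (F s * exp (s * a)) / (G s * exp (s * b))) = (\<lambda>s. F s / G s * exp (s * (a - b)))"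
  proof
    fix s
    have "exp (s * (a - b)) = exp (s * a) / exp (s * b)"
      by (simp add: right_diff_distrib exp_diff)
    then show "(F s * exp (s * a)) / (G s * exp (s * b)) = F s / G s * exp (s * (a - b))"
      by simp
  qed
  ultimately show ?thesis unfolding tasym_def using c by (intro exI[of _ "c1 / c2"]) auto
qed

lemma tasym_add_lt:
  assumes "tasym F a" "tasym G b" "a < b" shows "tasym (\<lambda>s. F s + G s) a"
proof -
  obtain c1 c2 where c: "c1 > 0" "c2 > 0" "((\<lambda>s. F s * exp (s * a)) \<longlongrightarrow> c1) at_top"
    "((\<lambda>s. G s * exp (s * b)) \<longlongrightarrow> c2) at_top" using assms unfolding tasym_def by blast
  have "((\<lambda>s. F s * exp (s * a) + (G s * exp (s * b)) * exp (s * (a - b))) \<longlongrightarrow> c1 + c2 * 0) at_top"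
    by (intro tendsto_add tendsto_mult c exp_neg_lim) (use assms in simp)
  moreover have "(\<lambda>s. F s * exp (s * a) + (G s * exp (s * b)) * exp (s * (a - b))) = (\<lambda>s. (F s + G s) * exp (s * a))"
  proof
    fix s
    have "exp (s * b) * exp (s * (a - b)) = exp (s * a)"
      by (simp add: exp_add[symmetric] algebra_simps)
    then show "F s * exp (s * a) + (G s * exp (s * b)) * exp (s * (a - b)) = (F s + G s) * exp (s * a)"
      by (simp add: algebra_simps)
  qed
  ultimately show ?thesis unfolding tasym_def using c by (intro exI[of _ c1]) auto
qed

lemma tasym_add:
  assumes "tasym F a" "tasym G b" shows "tasym (\<lambda>s. F s + G s) (min a b)"
proof (cases a b rule: linorder_cases)
  case less then show ?thesis using tasym_add_lt[OF assms] by simp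
next
  case greater then show ?thesis using tasym_add_lt[OF assms(2,1)] by (simp add: add.commute)
next
  case equal
  obtain c1 c2 where c: "c1 > 0" "c2 > 0" "((\<lambda>s. F s * exp (s * a)) \<longlongrightarrow> c1) at_top"
    "((\<lambda>s. G s * exp (s * b)) \<longlongrightarrow> c2) at_top" using assms unfolding tasym_def by blast
  have "((\<lambda>s. F s * exp (s * a) + G s * exp (s * b)) \<longlongrightarrow> c1 + c2) at_top"
    by (intro tendsto_add c)
  then show ?thesis unfolding tasym_def using c equal by (intro exI[of _ "c1 + c2"]) (auto simp: algebra_simps)
qed

lemma tasym_sum:
  assumes "finite K" "K \<noteq> {}" "\<forall>k\<in>K. tasym (F k) (a k)"
  shows "tasym (\<lambda>s. \<Sum>k\<in>K. F k s) (Min (a ` K))"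
  using assms
proof (induction K rule: finite_ne_induct)
  case (singleton x) then show ?case by simp
next
  case (insert x K)
  have "tasym (\<lambda>s. F x s + (\<Sum>k\<in>K. F k s)) (min (a x) (Min (a ` K)))"
    using insert by (intro tasym_add) auto
  then show ?case using insert by (simp add: Min_insert)
qed

lemma tasym_prod:
  assumes "finite K" "\<forall>k\<in>K. tasym (F k) (a k)"
  shows "tasym (\<lambda>s. \<Prod>k\<in>K. F k s) (\<Sum>k\<in>K. a k)"
  using assms
proof (induction K rule: finite_induct)
  case empty
  show ?case unfolding tasym_def by (intro exI[of _ 1]) auto
next
  case (insert x K)
  have "tasym (\<lambda>s. F x s * (\<Prod>k\<in>K. F k s)) (a x + (\<Sum>k\<in>K. a k))"
    using insert by (intro tasym_mult) auto
  then show ?case using insert by simp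
qed

lemma tasym_unique:
  assumes "tasym F a" "tasym G b" "eventually (\<lambda>s. F s = G s) at_top"
  shows "a = b"
proof (rule ccontr)
  have main: "False" if h1: "tasym F a" and h2: "tasym G b" and h3: "eventually (\<lambda>s. F s = G s) at_top" and h4: "a < b" for F G a b
  proof -
    obtain c1 c2 where c: "c1 > 0" "c2 > 0" "((\<lambda>s. F s * exp (s * a)) \<longlongrightarrow> c1) at_top"
      "((\<lambda>s. G s * exp (s * b)) \<longlongrightarrow> c2) at_top" using h1 h2 unfolding tasym_def by blast
    have "((\<lambda>s. (G s * exp (s * b)) * exp (s * (a - b))) \<longlongrightarrow> c2 * 0) at_top"
      by (intro tendsto_mult c exp_neg_lim) (use h4 in simp)
    moreover have "eventually (\<lambda>s. (G s * exp (s * b)) * exp (s * (a - b)) = F s * exp (s * a)) at_top"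
      using h3
    proof (rule eventually_mono)
      fix s assume "F s = G s"
      moreover have "exp (s * b) * exp (s * (a - b)) = exp (s * a)"
        by (simp add: exp_add[symmetric] algebra_simps)
      ultimately show "(G s * exp (s * b)) * exp (s * (a - b)) = F s * exp (s * a)"
        by (simp add: algebra_simps)
    qed
    ultimately have "((\<lambda>s. F s * exp (s * a)) \<longlongrightarrow> 0) at_top"
      using Lim_transform_eventually by fastforce
    then have "c1 = 0" using tendsto_unique[OF trivial_limit_at_top_linorder c(3)] by blast
    then show False using c by simp
  qed
  assume "a \<noteq> b"
  then show False
  proof (cases "a < b")
    case True then show ?thesis using main assms by blast
  next
    case False
    then have "b < a" using \<open>a \<noteq> b\<close> by simp
    moreover have "eventually (\<lambda>s. G s = F s) at_top" using assms(3) by (simp add: eq_commute)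
    ultimately show ?thesis using main assms by blast
  qed
qed

definition tQ :: "nat \<Rightarrow> (int \<Rightarrow> int) \<Rightarrow> (int \<Rightarrow> int) \<Rightarrow> int \<Rightarrow> int" where
  "tQ N a b i = Min ((\<lambda>k. (\<Sum>j\<in>{1..<k}. a (i + int j)) + (\<Sum>j\<in>{k<..N}. b (i + int j))) ` {1..N})"

definition tRy :: "nat \<Rightarrow> (int \<Rightarrow> int) \<Rightarrow> (int \<Rightarrow> int) \<Rightarrow> int \<Rightarrow> int" where
  "tRy N a b i = b i + tQ N a b (i - 1) - tQ N a b i"

definition tRx :: "nat \<Rightarrow> (int \<Rightarrow> int) \<Rightarrow> (int \<Rightarrow> int) \<Rightarrow> int \<Rightarrow> int" where
  "tRx N a b i = a i + tQ N a b i - tQ N a b (i - 1)"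

lemma tasym_gP:
  assumes "\<forall>i. tasym (\<lambda>s. X s i) (of_int (a i))" "\<forall>i. tasym (\<lambda>s. Y s i) (of_int (b i))" "N \<ge> 1"
  shows "tasym (\<lambda>s. gP N (X s) (Y s) i) (of_int (tQ N a b i))"
proof -
  define f where "f k = (\<Sum>j\<in>{1..<k}. a (i + int j)) + (\<Sum>j\<in>{k<..N}. b (i + int j))" for k
  have "tasym (\<lambda>s. gP N (X s) (Y s) i) (Min ((\<lambda>k. real_of_int (f k)) ` {1..N}))"
    unfolding gP_def
  proof (rule tasym_sum)
    show "finite {1..N}" by simp
    show "{1..N} \<noteq> {}" using assms(3) by simp
    show "\<forall>k\<in>{1..N}. tasym (\<lambda>s. (\<Prod>j\<in>{1..<k}. X s (i + int j)) * (\<Prod>j\<in>{k<..N}. Y s (i + int j))) (real_of_int (f k))"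
    proof
      fix k
      have "tasym (\<lambda>s. (\<Prod>j\<in>{1..<k}. X s (i + int j)) * (\<Prod>j\<in>{k<..N}. Y s (i + int j)))
         ((\<Sum>j\<in>{1..<k}. real_of_int (a (i + int j))) + (\<Sum>j\<in>{k<..N}. real_of_int (b (i + int j))))"
        using assms by (intro tasym_mult tasym_prod) auto
      then show "tasym (\<lambda>s. (\<Prod>j\<in>{1..<k}. X s (i + int j)) * (\<Prod>j\<in>{k<..N}. Y s (i + int j))) (real_of_int (f k))"
        unfolding f_def by simp
    qed
  qed
  moreover have "Min ((\<lambda>k. real_of_int (f k)) ` {1..N}) = of_int (tQ N a b i)"
  proof -
    have "of_int (Min (f ` {1..N})) = Min (of_int ` (f ` {1..N}) :: real set)"
      using assms(3) by (intro mono_Min_commute) (auto simp: mono_def)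
    then show ?thesis unfolding tQ_def f_def[symmetric] by (simp add: image_image)
  qed
  ultimately show ?thesis by simp
qed

lemma tasym_gRy:
  assumes "\<forall>i. tasym (\<lambda>s. X s i) (of_int (a i))" "\<forall>i. tasym (\<lambda>s. Y s i) (of_int (b i))" "N \<ge> 1"
  shows "\<forall>i. tasym (\<lambda>s. gRy N (X s) (Y s) i) (of_int (tRy N a b i))"
proof
  fix i
  have "tasym (\<lambda>s. Y s i * gP N (X s) (Y s) (i - 1) / gP N (X s) (Y s) i)
     (of_int (b i) + of_int (tQ N a b (i - 1)) - of_int (tQ N a b i))"
    using assms tasym_gP by (intro tasym_div tasym_mult) auto
  then show "tasym (\<lambda>s. gRy N (X s) (Y s) i) (of_int (tRy N a b i))"
    unfolding gRy_def tRy_def by simp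
qed

lemma tasym_gRx:
  assumes "\<forall>i. tasym (\<lambda>s. X s i) (of_int (a i))" "\<forall>i. tasym (\<lambda>s. Y s i) (of_int (b i))" "N \<ge> 1"
  shows "\<forall>i. tasym (\<lambda>s. gRx N (X s) (Y s) i) (of_int (tRx N a b i))"
proof
  fix i
  have "tasym (\<lambda>s. X s i * gP N (X s) (Y s) i / gP N (X s) (Y s) (i - 1))
     (of_int (a i) + of_int (tQ N a b i) - of_int (tQ N a b (i - 1)))"
    using assms tasym_gP by (intro tasym_div tasym_mult) auto
  then show "tasym (\<lambda>s. gRx N (X s) (Y s) i) (of_int (tRx N a b i))"
    unfolding gRx_def tRx_def by simp
qed

lemma eventually_ne:
  assumes "N \<ge> 1"
  shows "eventually (\<lambda>s. 2^N * exp (- (s * C)) \<noteq> exp (- (s * (A::real)))) at_top"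
proof (cases "C = A")
  case True
  have "(2::real)^N > 1" using assms by (intro one_less_power) auto
  then have "(2::real)^N \<noteq> 1" by simp
  then show ?thesis using True by simp
next
  case False
  have "eventually (\<lambda>s. s > \<bar>real N * ln 2 / (C - A)\<bar>) at_top" by (rule eventually_gt_at_top)
  then show ?thesis
  proof (rule eventually_mono)
    fix s assume s: "s > \<bar>real N * ln 2 / (C - A)\<bar>"
    show "2^N * exp (- (s * C)) \<noteq> exp (- (s * A))"
    proof
      assume "2^N * exp (- (s * C)) = exp (- (s * A))"
      moreover have "2^N * exp (- (s * C)) = exp (real N * ln 2 - s * C)"
        by (simp add: exp_diff exp_of_nat_mult divide_inverse exp_minus)
      ultimately have "real N * ln 2 - s * C = - (s * A)" by simp
      then have "s * (C - A) = real N * ln 2" by (simp add: algebra_simps)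
      then have "s = real N * ln 2 / (C - A)" using False by (simp add: field_simps)
      then show False using s abs_ge_self[of "real N * ln 2 / (C - A)"] by linarith
    qed
  qed
qed

lemma tasym_exp1: "tasym (\<lambda>s. exp (- (s * a))) a"
  using tasym_exp[of 1 a] by simp

lemma gpr_exp: "gpr N (\<lambda>j. C * exp (- (s * real_of_int (a j)))) = C^N * exp (- (s * (\<Sum>j<N. real_of_int (a (int j)))))"
  unfolding gpr_def by (simp add: prod.distrib exp_sum[symmetric] sum_distrib_left sum_negf)

lemma trop_ybe:
  fixes a b c :: "int \<Rightarrow> int"
  assumes pa: "per N a" and pb: "per N b" and pc: "per N c" and N: "N \<ge> 1"
  shows "tRy N a (tRy N b c) i = tRy N (tRy N a b) (tRy N (tRx N a b) c) i"
    and "tQ N b c i + tQ N a (tRy N b c) i = tQ N (tRx N a b) c i + tQ N (tRy N a b) (tRy N (tRx N a b) c) i"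
proof -
  define X where "X s j = 1 * exp (- (s * real_of_int (a j)))" for s j
  define Y where "Y s j = 1 * exp (- (s * real_of_int (b j)))" for s j
  define Z where "Z s j = 2 * exp (- (s * real_of_int (c j)))" for s j
  have aX: "\<forall>j. tasym (\<lambda>s. X s j) (of_int (a j))" unfolding X_def using tasym_exp1 by simp
  have aY: "\<forall>j. tasym (\<lambda>s. Y s j) (of_int (b j))" unfolding Y_def using tasym_exp1 by simp
  have aZ: "\<forall>j. tasym (\<lambda>s. Z s j) (of_int (c j))" unfolding Z_def by (simp add: tasym_exp)
  have gX: "good N (X s)" for s using pa unfolding good_def per_def pos_def X_def by simp
  have gY: "good N (Y s)" for s using pb unfolding good_def per_def pos_def Y_def by simp
  have gZ: "good N (Z s)" for s using pc unfolding good_def per_def pos_def Z_def by simp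
  have ev: "eventually (\<lambda>s. gpr N (Z s) \<noteq> gpr N (X s) \<and> gpr N (Z s) \<noteq> gpr N (Y s)) at_top"
  proof (rule eventually_conj)
    show "eventually (\<lambda>s. gpr N (Z s) \<noteq> gpr N (X s)) at_top"
      unfolding Z_def X_def gpr_exp using eventually_ne[OF N] by simp
    show "eventually (\<lambda>s. gpr N (Z s) \<noteq> gpr N (Y s)) at_top"
      unfolding Z_def Y_def gpr_exp using eventually_ne[OF N] by simp
  qed
  have A1: "\<forall>j. tasym (\<lambda>s. gRy N (X s) (gRy N (Y s) (Z s)) j) (of_int (tRy N a (tRy N b c) j))"
    by (intro tasym_gRy aX aY aZ N)
  have A2: "\<forall>j. tasym (\<lambda>s. gRy N (gRy N (X s) (Y s)) (gRy N (gRx N (X s) (Y s)) (Z s)) j)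
                    (of_int (tRy N (tRy N a b) (tRy N (tRx N a b) c) j))"
    by (intro tasym_gRy tasym_gRx aX aY aZ N)
  have E1: "eventually (\<lambda>s. gRy N (X s) (gRy N (Y s) (Z s)) i = gRy N (gRy N (X s) (Y s)) (gRy N (gRx N (X s) (Y s)) (Z s)) i) at_top"
    using ev by (rule eventually_mono) (use geo_ybe(1)[OF gX gY gZ N] in blast)
  have "real_of_int (tRy N a (tRy N b c) i) = real_of_int (tRy N (tRy N a b) (tRy N (tRx N a b) c) i)"
    using tasym_unique[OF _ _ E1] A1 A2 by blast
  then show "tRy N a (tRy N b c) i = tRy N (tRy N a b) (tRy N (tRx N a b) c) i" by simp
  have B1: "tasym (\<lambda>s. gP N (Y s) (Z s) i * gP N (X s) (gRy N (Y s) (Z s)) i)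
              (of_int (tQ N b c i) + of_int (tQ N a (tRy N b c) i))"
    by (intro tasym_mult tasym_gP tasym_gRy aX aY aZ N)
  have B2: "tasym (\<lambda>s. gP N (gRx N (X s) (Y s)) (Z s) i * gP N (gRy N (X s) (Y s)) (gRy N (gRx N (X s) (Y s)) (Z s)) i)
              (of_int (tQ N (tRx N a b) c i) + of_int (tQ N (tRy N a b) (tRy N (tRx N a b) c) i))"
    by (intro tasym_mult tasym_gP tasym_gRy tasym_gRx aX aY aZ N)
  have E2: "eventually (\<lambda>s. gP N (Y s) (Z s) i * gP N (X s) (gRy N (Y s) (Z s)) i =
      gP N (gRx N (X s) (Y s)) (Z s) i * gP N (gRy N (X s) (Y s)) (gRy N (gRx N (X s) (Y s)) (Z s)) i) at_top"
    using ev by (rule eventually_mono) (use geo_ybe(2)[OF gX gY gZ N] in blast)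
  have "real_of_int (tQ N b c i) + of_int (tQ N a (tRy N b c) i) = of_int (tQ N (tRx N a b) c i) + of_int (tQ N (tRy N a b) (tRy N (tRx N a b) c) i)"
    by (rule tasym_unique[OF B1 B2 E2])
  then show "tQ N b c i + tQ N a (tRy N b c) i = tQ N (tRx N a b) c i + tQ N (tRy N a b) (tRy N (tRx N a b) c) i"
    by linarith
qed

lemma per_comp: "per (n+1) (comp n x)"
  unfolding per_def comp_def
proof
  fix i
  have "(i + int (n + 1) - 1) mod int (n + 1) = ((i - 1) + int (n+1)) mod int (n + 1)"
    by (simp add: algebra_simps)
  also have "\<dots> = (i - 1) mod int (n + 1)" by (rule mod_add_self2)
  finally show "x ! nat ((i + int (n + 1) - 1) mod int (n + 1)) = x ! nat ((i - 1) mod int (n + 1))" by simp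
qed

lemma per_comp': "per (Suc n) (comp n x)"
  using per_comp[of n x] by simp

lemma nth_map_upt1: "k < n + 1 \<Longrightarrow> map g [1..<n+2] ! k = g (1 + k)"
proof -
  assume k: "k < n + 1"
  have "length [1..<n+2] = n + 1" by simp
  then have "map g [1..<n+2] ! k = g ([1..<n+2] ! k)" using k by (simp only: nth_map)
  moreover have "[1..<n+2] ! k = 1 + k" using k by (subst nth_upt) auto
  ultimately show ?thesis by simp
qed

lemma per_mult_int:
  assumes "per N f" shows "f (i + int N * k) = f i"
proof (induction k rule: int_induct[where k=0])
  case base then show ?case by simp
next
  case (step1 k)
  have "f (i + int N * (k + 1)) = f (i + int N * k + int N)" by (simp add: algebra_simps)
  then show ?case using step1 assms unfolding per_def by simp
next
  case (step2 k)
  have "f (i + int N * k) = f (i + int N * (k - 1) + int N)" by (simp add: algebra_simps)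
  then show ?case using step2 assms unfolding per_def by simp
qed

lemma comp_map:
  assumes "per (n+1) f"
  shows "comp n (map (\<lambda>i. f (int i)) [1..<n+2]) i = f i"
proof -
  define N where "N = n + 1"
  have r: "0 \<le> (i - 1) mod int N" "(i - 1) mod int N < int N" unfolding N_def by auto
  have "nat ((i - 1) mod int (n + 1)) < n + 1" using r unfolding N_def by (subst nat_less_iff) auto
  then have "comp n (map (\<lambda>i. f (int i)) [1..<n+2]) i = f (int (1 + nat ((i - 1) mod int N)))"
    unfolding comp_def N_def by (simp only: nth_map_upt1)
  also have "int (1 + nat ((i - 1) mod int N)) = i + int N * (- ((i - 1) div int N))"
    using r by (simp add: algebra_simps)
  also have "f \<dots> = f i" using per_mult_int assms unfolding N_def by blast
  finally show ?thesis .
qed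

lemma Q_tQ: "Q n i x y = tQ (n+1) (comp n x) (comp n y) i"
  unfolding Q_def tQ_def by simp

lemma tQ_per: assumes "per N a" "per N b" shows "tQ N a b (i + int N) = tQ N a b i"
  unfolding tQ_def using per_add[OF assms(1)] per_add[OF assms(2)] by simp

lemma tRy_per: assumes "per N a" "per N b" shows "per N (tRy N a b)"
  unfolding per_def tRy_def using tQ_per[OF assms] assms unfolding per_def
  by (metis (no_types, lifting) add.commute add_diff_eq diff_add_eq)

lemma tRx_per: assumes "per N a" "per N b" shows "per N (tRx N a b)"
  unfolding per_def tRx_def using tQ_per[OF assms] assms unfolding per_def
  by (metis (no_types, lifting) add.commute add_diff_eq diff_add_eq)

lemma R_t: "R n x y = (map (\<lambda>i. tRy (n+1) (comp n x) (comp n y) (int i)) [1..<n+2],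
                       map (\<lambda>i. tRx (n+1) (comp n x) (comp n y) (int i)) [1..<n+2])"
  unfolding R_def tRy_def tRx_def Q_tQ by simp

lemma comp_Ry: "comp n (fst (R n x y)) = tRy (n+1) (comp n x) (comp n y)"
  unfolding R_t fst_conv by (intro ext comp_map tRy_per per_comp)

lemma comp_Rx: "comp n (snd (R n x y)) = tRx (n+1) (comp n x) (comp n y)"
  unfolding R_t snd_conv by (intro ext comp_map tRx_per per_comp)

lemma ybe_list:
  "fst (R n x (fst (R n y z))) = fst (R n (fst (R n x y)) (fst (R n (snd (R n x y)) z)))"
proof -
  have "tRy (n+1) (comp n x) (comp n (fst (R n y z))) i =
        tRy (n+1) (comp n (fst (R n x y))) (comp n (fst (R n (snd (R n x y)) z))) i" for i
    unfolding comp_Ry comp_Rx by (rule trop_ybe(1)) (auto simp: per_comp per_comp')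
  then show ?thesis by (subst (1 2) R_t) simp
qed

lemma energy_list:
  "Q n i y z + Q n i x (fst (R n y z)) = Q n i (snd (R n x y)) z + Q n i (fst (R n x y)) (fst (R n (snd (R n x y)) z))"
  unfolding Q_tQ comp_Ry comp_Rx by (rule trop_ybe(2)) (auto simp: per_comp per_comp')

fun carr :: "nat \<Rightarrow> int list \<Rightarrow> int list list \<Rightarrow> int list" where
  "carr n v [] = v"
| "carr n v (p # ps) = carr n (snd (R n v p)) ps"

definition Dsum :: "nat \<Rightarrow> int list list \<Rightarrow> int list \<Rightarrow> int" where
  "Dsum n ps z = (\<Sum>j<length ps. Q n 0 (ps ! j) (moveL n (drop (Suc j) ps) z))"

lemma bbs_cons: "bbs_run n l v (p # ps) =
   (fst (R n v p) # fst (bbs_run n l (snd (R n v p)) ps),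
    min (wt p) (int l) - H n v p + snd (bbs_run n l (snd (R n v p)) ps))"
  by (simp add: split_beta Let_def)

lemma moveL_nil: "moveL n [] z = z" unfolding moveL_def by simp
lemma moveL_cons: "moveL n (a # ps) z = fst (R n a (moveL n ps z))" unfolding moveL_def by simp

lemma Dsum_nil: "Dsum n [] z = 0" unfolding Dsum_def by simp
lemma Dsum_cons: "Dsum n (a # ps) z = Q n 0 a (moveL n ps z) + Dsum n ps z"
  unfolding Dsum_def length_Cons sum.lessThan_Suc_shift by simp

lemma chain:
  "fst (R n v (moveL n ps z)) = moveL n (fst (bbs_run n l v ps)) (fst (R n (carr n v ps) z)) \<and>
   Dsum n ps z - Dsum n (fst (bbs_run n l v ps)) (fst (R n (carr n v ps) z))
     = Q n 0 (carr n v ps) z - Q n 0 v (moveL n ps z)"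
proof (induction ps arbitrary: v)
  case Nil
  then show ?case by (simp add: moveL_nil Dsum_nil)
next
  case (Cons a ps)
  define a' where "a' = fst (R n v a)"
  define v1 where "v1 = snd (R n v a)"
  define T' where "T' = fst (bbs_run n l v1 ps)"
  define c where "c = carr n v1 ps"
  define z' where "z' = fst (R n c z)"
  define w where "w = moveL n ps z"
  have IH1: "fst (R n v1 w) = moveL n T' z'" and IH2: "Dsum n ps z - Dsum n T' z' = Q n 0 c z - Q n 0 v1 w"
    using Cons.IH[of v1] unfolding T'_def c_def z'_def w_def by auto
  have T: "fst (bbs_run n l v (a # ps)) = a' # T'" unfolding bbs_cons a'_def T'_def v1_def by simp
  have C: "carr n v (a # ps) = c" unfolding c_def v1_def by simp
  have Y: "fst (R n v (fst (R n a w))) = fst (R n a' (fst (R n v1 w)))"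
    unfolding a'_def v1_def by (rule ybe_list)
  have En: "Q n 0 a w + Q n 0 v (fst (R n a w)) = Q n 0 v1 w + Q n 0 a' (fst (R n v1 w))"
    unfolding a'_def v1_def by (rule energy_list)
  show ?case
  proof
    show "fst (R n v (moveL n (a # ps) z)) = moveL n (fst (bbs_run n l v (a # ps))) (fst (R n (carr n v (a # ps)) z))"
      unfolding T C moveL_cons w_def[symmetric] z'_def[symmetric] Y IH1 by simp
    show "Dsum n (a # ps) z - Dsum n (fst (bbs_run n l v (a # ps))) (fst (R n (carr n v (a # ps)) z)) =
          Q n 0 (carr n v (a # ps)) z - Q n 0 v (moveL n (a # ps) z)"
      unfolding T C moveL_cons Dsum_cons w_def[symmetric] z'_def[symmetric]
      using IH1 IH2 En by simp
  qed
qed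

lemma bbs_snoc: "bbs_run n l v (ps @ [z]) =
   (fst (bbs_run n l v ps) @ [fst (R n (carr n v ps) z)],
    snd (bbs_run n l v ps) + (min (wt z) (int l) - H n (carr n v ps) z))"
proof (induction ps arbitrary: v)
  case Nil then show ?case by (simp del: bbs_run.simps add: bbs_cons bbs_run.simps(1))
next
  case (Cons a ps) then show ?case by (simp del: bbs_run.simps add: bbs_cons)
qed

lemma Edual_snoc:
  "Edual n i (q @ [z]) = Edual n i q + (\<Sum>j<length q. Q n i (q ! j) (moveL n (drop (Suc j) q) z))"
proof -
  define L where "L = length q"
  define f where "f = (\<lambda>(j, m). Q n i ((q @ [z]) ! j) (moveL n (take (m - j - 1) (drop (j + 1) (q @ [z]))) ((q @ [z]) ! m)))"
  define g where "g = (\<lambda>(j, m). Q n i (q ! j) (moveL n (take (m - j - 1) (drop (j + 1) q)) (q ! m)))"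
  define S where "S = {(j, m). j < m \<and> m < L}"
  have split: "{(j, m). j < m \<and> m < length (q @ [z])} = S \<union> (\<lambda>j. (j, L)) ` {..<L}"
    unfolding S_def L_def by auto
  have finS: "finite S" unfolding S_def by (rule finite_subset[of _ "{..<L} \<times> {..<L}"]) auto
  have disj: "S \<inter> (\<lambda>j. (j, L)) ` {..<L} = {}" unfolding S_def by auto
  have e1: "sum f S = sum g S"
  proof (rule sum.cong)
    fix x assume "x \<in> S"
    then obtain j m where x: "x = (j, m)" "j < m" "m < L" unfolding S_def by auto
    have "take (m - j - 1) (drop (j + 1) (q @ [z])) = take (m - j - 1) (drop (j + 1) q)"
      using x unfolding L_def by (simp add: take_append)
    then show "f x = g x" unfolding f_def g_def using x unfolding L_def by (simp add: nth_append)
  qed simp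
  have e2: "sum f ((\<lambda>j. (j, L)) ` {..<L}) = (\<Sum>j<L. Q n i (q ! j) (moveL n (drop (Suc j) q) z))"
  proof -
    have "sum f ((\<lambda>j. (j, L)) ` {..<L}) = (\<Sum>j<L. f (j, L))"
      by (subst sum.reindex) (auto simp: inj_on_def)
    also have "\<dots> = (\<Sum>j<L. Q n i (q ! j) (moveL n (drop (Suc j) q) z))"
    proof (rule sum.cong)
      fix j assume j: "j \<in> {..<L}"
      have "take (L - j - 1) (drop (j + 1) (q @ [z])) = drop (Suc j) q"
        using j unfolding L_def by (simp add: take_append)
      then show "f (j, L) = Q n i (q ! j) (moveL n (drop (Suc j) q) z)"
        unfolding f_def using j unfolding L_def by (simp add: nth_append)
    qed simp
    finally show ?thesis .
  qed
  have "Edual n i (q @ [z]) = sum f (S \<union> (\<lambda>j. (j, L)) ` {..<L})"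
    unfolding Edual_def f_def split[symmetric] by simp
  also have "\<dots> = sum f S + sum f ((\<lambda>j. (j, L)) ` {..<L})"
    using finS disj by (intro sum.union_disjoint) auto
  finally have A: "Edual n i (q @ [z]) = sum f S + sum f ((\<lambda>j. (j, L)) ` {..<L})" .
  have B: "sum g S = Edual n i q" unfolding g_def S_def Edual_def L_def by simp
  show ?thesis using A B e1 e2 unfolding L_def by simp
qed

lemma sumA: "1 \<le> k \<Longrightarrow> (\<Sum>j\<in>{1..<k}. a (i - 1 + int j)) = (\<Sum>j<k-1. (a (i + int j) :: int))"
proof -
  assume k: "1 \<le> k"
  have "(\<Sum>j\<in>{1..<k}. a (i - 1 + int j)) = (\<Sum>j\<in>{0+1..<(k-1)+1}. a (i - 1 + int j))"
    using k by simp
  also have "\<dots> = (\<Sum>j\<in>{0..<k-1}. a (i - 1 + int (j + 1)))" by (rule sum.shift_bounds_nat_ivl)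
  also have "\<dots> = (\<Sum>j<k-1. a (i + int j))" by (simp add: atLeast0LessThan)
  finally show ?thesis .
qed

lemma sumA2: "1 \<le> (m::nat) \<Longrightarrow> (\<Sum>j<m. a (i + int j)) = a i + (\<Sum>j\<in>{1..<m}. (a (i + int j) :: int))"
proof -
  assume k: "1 \<le> m"
  have "(\<Sum>j<m. a (i + int j)) = sum (\<lambda>j. a (i + int j)) {0..<m}" by (simp add: atLeast0LessThan)
  also have "\<dots> = a (i + int 0) + sum (\<lambda>j. a (i + int j)) {Suc 0..<m}" using k by (intro sum.atLeast_Suc_lessThan) simp
  finally show ?thesis by simp
qed

lemma sumB:
  assumes py: "per N y" and k: "1 \<le> k" "k \<le> N"
  shows "y i + (\<Sum>j\<in>{k<..N}. y (i - 1 + int j)) = (\<Sum>j\<in>{k-1<..N}. (y (i + int j) :: int))"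
proof -
  obtain m where m: "k = Suc m" "m < N" using k by (cases k) auto
  have "(\<Sum>j\<in>{k<..N}. y (i - 1 + int j)) = (\<Sum>j\<in>{Suc m+1..(N-1)+1}. y (i - 1 + int j))"
  proof -
    have "{k<..N} = {Suc m+1..(N-1)+1}" using m by auto
    then show ?thesis by simp
  qed
  also have "\<dots> = (\<Sum>j\<in>{Suc m..N-1}. y (i - 1 + int (j + 1)))"
    by (rule sum.shift_bounds_cl_nat_ivl)
  also have "\<dots> = (\<Sum>j\<in>{Suc m..N-1}. y (i + int j))" by simp
  finally have e: "(\<Sum>j\<in>{k<..N}. y (i - 1 + int j)) = (\<Sum>j\<in>{Suc m..N-1}. y (i + int j))" .
  have yN: "y i = y (i + int N)" using py unfolding per_def by simp
  have s: "{m<..N} = insert N {Suc m..N-1}" using m by auto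
  have "(\<Sum>j\<in>{m<..N}. y (i + int j)) = y (i + int N) + (\<Sum>j\<in>{Suc m..N-1}. y (i + int j))"
    unfolding s by (subst sum.insert) auto
  then show ?thesis using e yN m by simp
qed

lemma trop_nonneg:
  fixes a b :: "int \<Rightarrow> int"
  assumes pa: "per N a" and pb: "per N b" and N: "N \<ge> 1"
    and na: "\<forall>i. 0 \<le> a i" and nb: "\<forall>i. 0 \<le> b i"
  shows "0 \<le> tRy N a b i"
proof -
  define f where "f i k = (\<Sum>j\<in>{1..<k}. a (i + int j)) + (\<Sum>j\<in>{k<..N}. b (i + int j))" for i k
  have tq: "tQ N a b i = Min (f i ` {1..N})" for i unfolding tQ_def f_def by simp
  have ne: "f i ` {1..N} \<noteq> {}" for i using N by simp
  obtain k0 where k0: "k0 \<in> {1..N}" "tQ N a b (i - 1) = f (i - 1) k0"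
    using Min_in[OF _ ne[of "i - 1"]] unfolding tq by auto
  have le: "tQ N a b i \<le> f i k" if "k \<in> {1..N}" for k unfolding tq using that by (intro Min_le) auto
  have key: "tQ N a b i \<le> b i + f (i - 1) k0"
  proof (cases "k0 \<ge> 2")
    case True
    have A: "(\<Sum>j\<in>{1..<k0}. a (i - 1 + int j)) = a i + (\<Sum>j\<in>{1..<k0-1}. a (i + int j))"
      using True sumA[of k0 a i] sumA2[of "k0 - 1" a i] by simp
    have B: "b i + (\<Sum>j\<in>{k0<..N}. b (i - 1 + int j)) = (\<Sum>j\<in>{k0-1<..N}. b (i + int j))"
      using sumB[OF pb] k0 by auto
    have "b i + f (i - 1) k0 = a i + f i (k0 - 1)" unfolding f_def using A B by simp
    moreover have "tQ N a b i \<le> f i (k0 - 1)" using True k0 by (intro le) auto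
    ultimately show ?thesis using na by smt
  next
    case False
    then have k1: "k0 = 1" using k0 by auto
    have B: "b i + (\<Sum>j\<in>{1<..N}. b (i - 1 + int j)) = (\<Sum>j\<in>{0<..N}. b (i + int j))"
      using sumB[OF pb, of 1 i] N by simp
    have s: "{0<..N} = insert 1 {1<..N}" using N by auto
    have "b i + f (i - 1) k0 = b (i + 1) + f i 1" unfolding f_def k1 using B s by simp
    moreover have "tQ N a b i \<le> f i 1" using N by (intro le) auto
    ultimately show ?thesis using nb by smt
  qed
  then show ?thesis unfolding tRy_def using k0 by simp
qed

definition okv :: "nat \<Rightarrow> int list \<Rightarrow> bool" where
  "okv n x \<longleftrightarrow> length x = n + 1 \<and> (\<forall>a\<in>set x. 0 \<le> a)"

lemma comp_nth: "1 \<le> j \<Longrightarrow> j \<le> n + 1 \<Longrightarrow> comp n x (int j) = x ! (j - 1)"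
proof -
  assume j: "1 \<le> j" "j \<le> n + 1"
  have "(int j - 1) mod int (n + 1) = int j - 1" using j by (intro mod_pos_pos_trivial) auto
  then show ?thesis unfolding comp_def using j by (simp add: nat_diff_distrib)
qed

lemma wt_comp: "length x = n + 1 \<Longrightarrow> wt x = (\<Sum>j\<in>{1..n+1}. comp n x (int j))"
proof -
  assume l: "length x = n + 1"
  have "wt x = (\<Sum>k = 0..<n+1. x ! k)" unfolding wt_def using l by (simp add: sum_list_sum_nth)
  also have "\<dots> = (\<Sum>k = 0..n. x ! k)" by (simp add: atLeastLessThanSuc_atLeastAtMost)
  also have "\<dots> = (\<Sum>k = 0..n. comp n x (int (Suc k)))"
  proof (rule sum.cong)
    fix k assume k: "k \<in> {0..n}"
    have "comp n x (int (Suc k)) = x ! (Suc k - 1)" by (rule comp_nth) (use k in auto)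
    then show "x ! k = comp n x (int (Suc k))" by simp
  qed simp
  also have "\<dots> = (\<Sum>j = Suc 0..Suc n. comp n x (int j))" by (rule sum.shift_bounds_cl_Suc_ivl[symmetric])
  finally show ?thesis by simp
qed

lemma comp_nonneg: "okv n x \<Longrightarrow> 0 \<le> comp n x i"
proof -
  assume o: "okv n x"
  have "nat ((i - 1) mod int (n + 1)) < length x" using o unfolding okv_def
    by (subst nat_less_iff) auto
  then have "x ! nat ((i - 1) mod int (n + 1)) \<in> set x" by (rule nth_mem)
  then show ?thesis using o unfolding okv_def comp_def by blast
qed

lemma len_Ry: "length (fst (R n x y)) = n + 1" unfolding R_def by simp
lemma len_Rx: "length (snd (R n x y)) = n + 1" unfolding R_def by simp

lemma tQ_tele:
  assumes "per N a" "per N b" "N \<ge> 1"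
  shows "(\<Sum>j\<in>{1..N}. tQ N a b (int j - 1) - tQ N a b (int j)) = 0"
proof -
  define g where "g k = tQ N a b (int k)" for k
  have "(\<Sum>j\<in>{1..N}. tQ N a b (int j - 1) - tQ N a b (int j)) = (\<Sum>j\<in>{Suc 0..Suc (N - 1)}. g (j - 1) - g j)"
  proof -
    obtain M where "N = Suc M" using assms(3) by (cases N) auto
    then show ?thesis unfolding g_def by (intro sum.cong) (auto simp: of_nat_diff)
  qed
  also have "\<dots> = (\<Sum>k\<in>{0..N-1}. g k - g (Suc k))" by (subst sum.shift_bounds_cl_Suc_ivl) simp
  also have "\<dots> = g 0 - g N"
  proof -
    obtain M where Suc: "N = Suc M" using assms(3) by (cases N) auto
    have "(\<Sum>k\<in>{0..N-1}. g k - g (Suc k)) = (\<Sum>k<N. g k - g (Suc k))"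
      using Suc by (simp add: atLeast0AtMost lessThan_Suc_atMost)
    then show ?thesis using Suc by (simp add: sum_lessThan_telescope')
  qed
  also have "\<dots> = 0" unfolding g_def using tQ_per[OF assms(1,2), of 0] by simp
  finally show ?thesis .
qed

lemma wt_Ry: "length y = n + 1 \<Longrightarrow> wt (fst (R n x y)) = wt y"
proof -
  assume l: "length y = n + 1"
  define a where "a = comp n x"
  define b where "b = comp n y"
  have "wt (fst (R n x y)) = (\<Sum>j\<in>{1..n+1}. tRy (n+1) a b (int j))"
    using wt_comp[OF len_Ry] unfolding comp_Ry a_def b_def by simp
  also have "\<dots> = (\<Sum>j\<in>{1..n+1}. b (int j)) + (\<Sum>j\<in>{1..n+1}. tQ (n+1) a b (int j - 1) - tQ (n+1) a b (int j))"
    unfolding tRy_def by (simp add: sum.distrib[symmetric] algebra_simps)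
  also have "\<dots> = wt y" using tQ_tele[of "n+1" a b] wt_comp[OF l] unfolding a_def b_def
    by (simp add: per_comp per_comp')
  finally show ?thesis .
qed

lemma wt_Rx: "length x = n + 1 \<Longrightarrow> wt (snd (R n x y)) = wt x"
proof -
  assume l: "length x = n + 1"
  define a where "a = comp n x"
  define b where "b = comp n y"
  have "wt (snd (R n x y)) = (\<Sum>j\<in>{1..n+1}. tRx (n+1) a b (int j))"
    using wt_comp[OF len_Rx] unfolding comp_Rx a_def b_def by simp
  also have "\<dots> = (\<Sum>j\<in>{1..n+1}. a (int j)) - (\<Sum>j\<in>{1..n+1}. tQ (n+1) a b (int j - 1) - tQ (n+1) a b (int j))"
  proof -
    have "(\<Sum>j\<in>{1..n+1}. tRx (n+1) a b (int j)) + (\<Sum>j\<in>{1..n+1}. tQ (n+1) a b (int j - 1) - tQ (n+1) a b (int j))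
        = (\<Sum>j\<in>{1..n+1}. a (int j))"
      unfolding sum.distrib[symmetric] tRx_def by simp
    then show ?thesis by simp
  qed
  also have "\<dots> = wt x" using tQ_tele[of "n+1" a b] wt_comp[OF l] unfolding a_def b_def
    by (simp add: per_comp per_comp')
  finally show ?thesis .
qed

lemma okv_Ry: "okv n x \<Longrightarrow> okv n y \<Longrightarrow> okv n (fst (R n x y))"
proof -
  assume ox: "okv n x" and oy: "okv n y"
  have "0 \<le> tRy (n+1) (comp n x) (comp n y) i" for i
    by (rule trop_nonneg) (use comp_nonneg[OF ox] comp_nonneg[OF oy] per_comp in auto)
  then show ?thesis unfolding okv_def using len_Ry unfolding R_t by auto
qed

lemma okv_u: "okv n (u n M)" unfolding okv_def u_def by auto

lemma wt_u: "wt (u n M) = int M" unfolding wt_def u_def by (simp add: sum_list_replicate)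

lemma comp_u: "1 \<le> j \<Longrightarrow> j \<le> n + 1 \<Longrightarrow> comp n (u n M) (int j) = (if j = 1 then int M else 0)"
proof -
  assume j: "1 \<le> j" "j \<le> n + 1"
  have "comp n (u n M) (int j) = (int M # replicate n 0) ! (j - 1)" unfolding u_def by (rule comp_nth[OF j])
  then show ?thesis using j by (cases "j - 1") auto
qed

lemma sum_nonneg_comp: "okv n w \<Longrightarrow> 0 \<le> (\<Sum>j\<in>A. comp n w (f j))"
  by (intro sum_nonneg) (simp add: comp_nonneg)

lemma Q_u0:
  assumes o: "okv n w" and le: "wt w \<le> int M"
  shows "Q n 0 (u n M) w = wt w - comp n w 1"
proof -
  define f where "f k = (\<Sum>j\<in>{1..<k}. comp n (u n M) (0 + int j)) + (\<Sum>j\<in>{k<..n+1}. comp n w (0 + int j))" for k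
  have Qf: "Q n 0 (u n M) w = Min (f ` {1..n+1})" unfolding Q_def f_def by simp
  have fu: "(\<Sum>j\<in>{1..<k}. comp n (u n M) (0 + int j)) = (if 2 \<le> k then int M else 0)" if k: "k \<le> n + 1" for k
  proof -
    have "(\<Sum>j\<in>{1..<k}. comp n (u n M) (0 + int j)) = (\<Sum>j\<in>{1..<k}. if j = 1 then int M else 0)"
      using k by (intro sum.cong) (auto simp: comp_u)
    also have "\<dots> = (if 1 \<in> {1..<k} then int M else 0)" by (subst sum.delta) auto
    finally show ?thesis by auto
  qed
  have wt1: "wt w = comp n w 1 + (\<Sum>j\<in>{1<..n+1}. comp n w (int j))"
  proof -
    have s: "{1..n+1} = insert 1 {1<..n+1}" by auto
    show ?thesis using wt_comp[of w n] o unfolding okv_def s by simp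
  qed
  have f1: "f 1 = wt w - comp n w 1" unfolding f_def using wt1 by simp
  have "Min (f ` {1..n+1}) = f 1"
  proof (rule Min_eqI)
    show "finite (f ` {1..n+1})" by simp
    show "f 1 \<in> f ` {1..n+1}" by auto
    fix y assume "y \<in> f ` {1..n+1}"
    then obtain k where k: "k \<in> {1..n+1}" "y = f k" by auto
    show "f 1 \<le> y"
    proof (cases "k = 1")
      case True then show ?thesis using k by simp
    next
      case False
      then have "f k = int M + (\<Sum>j\<in>{k<..n+1}. comp n w (0 + int j))" unfolding f_def using fu k by auto
      moreover have "0 \<le> (\<Sum>j\<in>{k<..n+1}. comp n w (0 + int j))" by (rule sum_nonneg_comp[OF o])
      moreover have "0 \<le> comp n w 1" by (rule comp_nonneg[OF o])
      ultimately show ?thesis using k f1 le by simp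
    qed
  qed
  then show ?thesis using Qf f1 by simp
qed

lemma Q_u1:
  assumes o: "okv n w"
  shows "Q n 1 (u n M) w = 0"
proof -
  define f where "f k = (\<Sum>j\<in>{1..<k}. comp n (u n M) (1 + int j)) + (\<Sum>j\<in>{k<..n+1}. comp n w (1 + int j))" for k
  have Qf: "Q n 1 (u n M) w = Min (f ` {1..n+1})" unfolding Q_def f_def by simp
  have fu: "(\<Sum>j\<in>{1..<k}. comp n (u n M) (1 + int j)) = 0" if k: "k \<le> n + 1" for k
  proof (rule sum.neutral, rule ballI)
    fix j assume j: "j \<in> {1..<k}"
    have "comp n (u n M) (int (Suc j)) = (if Suc j = 1 then int M else 0)" using j k by (intro comp_u) auto
    then show "comp n (u n M) (1 + int j) = 0" using j by simp
  qed
  have "Min (f ` {1..n+1}) = 0"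
  proof (rule Min_eqI)
    show "finite (f ` {1..n+1})" by simp
    show "0 \<in> f ` {1..n+1}"
    proof
      have "f (n+1) = (\<Sum>j\<in>{1..<n+1}. comp n (u n M) (1 + int j)) + (\<Sum>j\<in>{n+1<..n+1}. comp n w (1 + int j))"
        by (simp only: f_def)
      also have "\<dots> = 0" by (subst fu) auto
      finally show "0 = f (n+1)" by simp
    qed simp
    fix y assume "y \<in> f ` {1..n+1}"
    then obtain k where k: "k \<in> {1..n+1}" "y = f k" by auto
    then show "0 \<le> y" unfolding f_def using fu sum_nonneg_comp[OF o] by simp
  qed
  then show ?thesis using Qf by simp
qed

lemma comp_Ry1: "comp n (fst (R n x w)) 1 = comp n w 1 + Q n 0 x w - Q n 1 x w"
  unfolding comp_Ry tRy_def Q_tQ by simp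

lemma moveL_props:
  assumes "okv n z" "\<forall>x\<in>set ps. okv n x"
  shows "okv n (moveL n ps z) \<and> wt (moveL n ps z) = wt z"
  using assms
proof (induction ps)
  case Nil then show ?case by (simp add: moveL_nil)
next
  case (Cons a ps)
  then have ih: "okv n (moveL n ps z)" "wt (moveL n ps z) = wt z" by auto
  have "okv n (fst (R n a (moveL n ps z)))" using okv_Ry Cons.prems ih by auto
  moreover have "wt (fst (R n a (moveL n ps z))) = wt z" using wt_Ry ih unfolding okv_def by metis
  ultimately show ?case by (simp add: moveL_cons)
qed

lemma carr_props:
  assumes "length v = n + 1"
  shows "length (carr n v ps) = n + 1 \<and> wt (carr n v ps) = wt v"
  using assms
proof (induction ps arbitrary: v)
  case Nil then show ?case by simp
next
  case (Cons a ps)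
  have "length (snd (R n v a)) = n + 1" "wt (snd (R n v a)) = wt v"
    using len_Rx wt_Rx Cons.prems by auto
  then show ?case using Cons.IH[of "snd (R n v a)"] by simp
qed

lemma bbs_wt:
  assumes "\<forall>x\<in>set ps. length x = n + 1"
  shows "map wt (fst (bbs_run n l v ps)) = map wt ps"
  using assms
proof (induction ps arbitrary: v)
  case Nil then show ?case by simp
next
  case (Cons a ps)
  then show ?case by (simp del: bbs_run.simps add: bbs_cons wt_Ry)
qed

lemma main_snoc:
  assumes "\<forall>x\<in>set p. okv n x \<and> wt x \<le> int M"
  shows "Edual n 0 (u n M # p) - Edual n 0 (u n M # fst (bbs_run n l (u n l) p)) = snd (bbs_run n l (u n l) p)"
  using assms
proof (induction p rule: rev_induct)
  case Nil then show ?case by simp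
next
  case (snoc z p)
  define v0 where "v0 = u n l"
  define T0 where "T0 = fst (bbs_run n l v0 p)"
  define c where "c = carr n v0 p"
  define z' where "z' = fst (R n c z)"
  define w where "w = moveL n p z"
  define w' where "w' = fst (R n v0 w)"
  have IH: "Edual n 0 (u n M # p) - Edual n 0 (u n M # T0) = snd (bbs_run n l v0 p)"
    using snoc unfolding T0_def v0_def by simp
  have ch: "w' = moveL n T0 z'" "Dsum n p z - Dsum n T0 z' = Q n 0 c z - Q n 0 v0 w"
    using chain[of n v0 p z l] unfolding w'_def w_def T0_def z'_def c_def by auto
  have bs: "fst (bbs_run n l v0 (p @ [z])) = T0 @ [z']"
           "snd (bbs_run n l v0 (p @ [z])) = snd (bbs_run n l v0 p) + (min (wt z) (int l) - H n c z)"
    unfolding bbs_snoc T0_def z'_def c_def by simp_all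
  have E1: "Edual n 0 (u n M # p @ [z]) = Edual n 0 (u n M # p) + Q n 0 (u n M) w + Dsum n p z"
    using Edual_snoc[of n 0 "u n M # p" z] Dsum_cons[of n "u n M" p z] unfolding Dsum_def w_def by simp
  have E2: "Edual n 0 (u n M # T0 @ [z']) = Edual n 0 (u n M # T0) + Q n 0 (u n M) w' + Dsum n T0 z'"
    using Edual_snoc[of n 0 "u n M # T0" z'] Dsum_cons[of n "u n M" T0 z'] ch(1) unfolding Dsum_def by simp
  have oz: "okv n z" and wz: "wt z \<le> int M" and op: "\<forall>x\<in>set p. okv n x" using snoc.prems by auto
  have ow: "okv n w" "wt w = wt z" using moveL_props[OF oz op] unfolding w_def by auto
  have ow': "okv n w'" "wt w' = wt w" unfolding w'_def v0_def using okv_Ry[OF okv_u ow(1)] wt_Ry ow(1)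
    unfolding okv_def by auto
  have q1: "Q n 0 (u n M) w = wt w - comp n w 1" using Q_u0 ow wz by simp
  have q2: "Q n 0 (u n M) w' = wt w' - comp n w' 1" using Q_u0 ow ow' wz by simp
  have q3: "comp n w' 1 = comp n w 1 + Q n 0 v0 w" unfolding w'_def using comp_Ry1 Q_u1[OF ow(1)] unfolding v0_def by simp
  have wc: "wt c = int l" unfolding c_def v0_def using carr_props[of "u n l" n p] wt_u okv_u unfolding okv_def by simp
  have Hc: "H n c z = min (int l) (wt z) - Q n 0 c z" unfolding H_def wc ..
  show ?case unfolding v0_def[symmetric] bs
    using IH E1 E2 ch(2) q1 q2 q3 ow'(2) Hc by simp
qed

lemma Q_per0: "Q n (int n + 1) x y = Q n 0 x y"
  unfolding Q_tQ using tQ_per[OF per_comp[of n x] per_comp[of n y], of 0] by (simp add: add.commute)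

lemma Edual_per: "Edual n (int n + 1) q = Edual n 0 q"
  unfolding Edual_def Q_per0 ..

lemma fmax_ge: "x \<in> set p \<Longrightarrow> f x \<le> foldr max (map f p) (0::int)"
  by (induction p) auto

lemma fmax_nonneg: "0 \<le> foldr max (map f p) (0::int)"
  by (induction p) auto

theorem proposition4p8:
  fixes n l :: nat and lam :: "nat list" and p :: "int list list"
  assumes "n \<ge> 1" and "l \<ge> 1"
    and "length lam = length p"
    and "\<forall>j < length p. lam ! j \<ge> 1 \<and> p ! j \<in> B n (lam ! j)"
  shows "Energy n (int n + 1) p - Energy n (int n + 1) (T n l p) = E n l p"
proof -
  define F where "F = foldr max (map wt p) 0"
  define M0 where "M0 = nat F"
  have FM: "int M0 = F" unfolding M0_def F_def using fmax_nonneg[of wt p] by simp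
  have ok: "\<forall>x\<in>set p. okv n x \<and> wt x \<le> int M0"
  proof
    fix x assume x: "x \<in> set p"
    then obtain j where j: "j < length p" "x = p ! j" by (auto simp: in_set_conv_nth)
    then have "x \<in> B n (lam ! j)" using assms(4) by auto
    then have "okv n x" unfolding B_def okv_def by auto
    moreover have "wt x \<le> int M0" using fmax_ge[OF x, of wt] FM unfolding F_def by simp
    ultimately show "okv n x \<and> wt x \<le> int M0" by simp
  qed
  have lens: "\<forall>x\<in>set p. length x = n + 1" using ok unfolding okv_def by auto
  have mw: "map wt (T n l p) = map wt p" unfolding T_def by (rule bbs_wt[OF lens])
  have e1: "Energy n (int n + 1) p = Edual n 0 (u n M0 # p)"
    unfolding Energy_def Edual_per M0_def F_def ..
  have e2: "Energy n (int n + 1) (T n l p) = Edual n 0 (u n M0 # T n l p)"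
    unfolding Energy_def Edual_per M0_def F_def mw ..
  show ?thesis unfolding e1 e2 unfolding T_def E_def by (rule main_snoc[OF ok])
qed

end
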